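(* Let $(\Omega,\mathcal{F},\mathbb{P})$ be a probability space, $L$ a Riesz space with $L^\infty\subset L\subset L^1$, and $\rho: L \to (-\infty,\infty]$ monotone, cash-invariant and positively homogeneous. Assume $\rho$ is not as conservative as the worst-case risk measure, i.e. there exists $X \in L$ with $\rho(X) < \mathrm{WC}(X) := \operatorname{ess\,sup}(-X)$. Then there exists a market $(S^0,S)$ on $(\Omega,\mathcal{F},\mathbb{P})$, satisfying the standing assumptions in the context and with returns in $L$, that does not admit arbitrage of the first kind but admits strong $\rho$-arbitrage.
   Context: A market: riskless asset with $S^0_0=1$, $S^0_1=1+r$, $r>-1$, and risky assets $S^1,\dots,S^d$ with constants $S^i_0>0$ and real-valued $\mathcal{F}$-measurable $S^i_1$; returns $R^i:=(S^i_1-S^i_0)/S^i_0$. Standing assumptions: nonredundancy (if $\theta\in\mathbb{R}^{1+d}$ with $\sum_{i=0}^d\theta^iS^i_t=0$ a.s. for $t\in\{0,1\}$ then $\theta=0$), $R^i\in L^1$, and $\mathbb{E}[R^i]\ne r$ for some $i$. Portfolio $\pi\in\mathbb{R}^d$ has excess return $X_\pi:=\pi\cdot(R-r\mathbf{1})$. Monotone: $X_1\le X_2$ a.s. implies $\rho(X_1)\ge\rho(X_2)$; cash-invariant: $\rho(X+c)=\rho(X)-c$; positively homogeneous: $\rho(\lambda X)=\lambda\rho(X)$ for $\lambda\ge 0$. Arbitrage of the first kind: a strategy $(\theta^0,\theta)\in\mathbb{R}^{1+d}$ with $\theta^0S^0_0+\theta\cdot S_0\le0$, $\theta^0S^0_1+\theta\cdot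 S_1\ge0$ a.s., and $\mathbb{P}[\theta^0S^0_1+\theta\cdot S_1>0]>0$. Strong $\rho$-arbitrage: for every $\pi\in\mathbb{R}^d$ there is $\pi'\in\mathbb{R}^d$ with $\mathbb{E}[X_{\pi'}]>\mathbb{E}[X_\pi]$ and $\rho(X_{\pi'})<\rho(X_\pi)$. *)

theory Defs
  imports "HOL-Probability.Probability"
begin

definition Linf :: "'a measure \<Rightarrow> ('a \<Rightarrow> real) set" where
  "Linf M = {X. X \<in> borel_measurable M \<and> (\<exists>C. AE \<omega> in M. \<bar>X \<omega>\<bar> \<le> C)}"

definition L1 :: "'a measure \<Rightarrow> ('a \<Rightarrow> real) set" where
  "L1 M = {X. integrable M X}"

definition riesz_space :: "('a \<Rightarrow> real) set \<Rightarrow> bool" where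
  "riesz_space L \<longleftrightarrow>
     (\<lambda>\<omega>. 0) \<in> L \<and>
     (\<forall>X\<in>L. \<forall>Y\<in>L. (\<lambda>\<omega>. X \<omega> + Y \<omega>) \<in> L) \<and>
     (\<forall>X\<in>L. \<forall>c::real. (\<lambda>\<omega>. c * X \<omega>) \<in> L) \<and>
     (\<forall>X\<in>L. \<forall>Y\<in>L. (\<lambda>\<omega>. max (X \<omega>) (Y \<omega>)) \<in> L)"

definition monotone_rm :: "'a measure \<Rightarrow> ('a \<Rightarrow> real) set \<Rightarrow> (('a \<Rightarrow> real) \<Rightarrow> ereal) \<Rightarrow> bool" where
  "monotone_rm M L \<rho> \<longleftrightarrow>
     (\<forall>X\<in>L. \<forall>Y\<in>L. (AE \<omega> in M. X \<omega> \<le> Y \<omega>) \<longrightarrow> \<rho> X \<ge> \<rho> Y)"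

definition cash_invariant :: "('a \<Rightarrow> real) set \<Rightarrow> (('a \<Rightarrow> real) \<Rightarrow> ereal) \<Rightarrow> bool" where
  "cash_invariant L \<rho> \<longleftrightarrow>
     (\<forall>X\<in>L. \<forall>c::real. \<rho> (\<lambda>\<omega>. X \<omega> + c) = \<rho> X - ereal c)"

definition pos_homogeneous :: "('a \<Rightarrow> real) set \<Rightarrow> (('a \<Rightarrow> real) \<Rightarrow> ereal) \<Rightarrow> bool" where
  "pos_homogeneous L \<rho> \<longleftrightarrow>
     (\<forall>X\<in>L. \<forall>t::real. t \<ge> 0 \<longrightarrow> \<rho> (\<lambda>\<omega>. t * X \<omega>) = ereal t * \<rho> X)"

definition WC :: "'a measure \<Rightarrow> ('a \<Rightarrow> real) \<Rightarrow> ereal" where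
  "WC M X = esssup M (\<lambda>\<omega>. ereal (- X \<omega>))"

(* Market: riskless asset S^0_0 = 1, S^0_1 = 1 + r; risky assets indexed by i \<in> {1..d}
   with initial prices S0 i and terminal prices S1 i. *)
definition ret :: "(nat \<Rightarrow> real) \<Rightarrow> (nat \<Rightarrow> 'a \<Rightarrow> real) \<Rightarrow> nat \<Rightarrow> 'a \<Rightarrow> real" where
  "ret S0 S1 i \<omega> = (S1 i \<omega> - S0 i) / S0 i"

definition excess_return :: "nat \<Rightarrow> real \<Rightarrow> (nat \<Rightarrow> real) \<Rightarrow> (nat \<Rightarrow> 'a \<Rightarrow> real)
    \<Rightarrow> (nat \<Rightarrow> real) \<Rightarrow> 'a \<Rightarrow> real" where
  "excess_return d r S0 S1 \<pi> \<omega> = (\<Sum>i=1..d. \<pi> i * (ret S0 S1 i \<omega> - r))"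

definition nonredundant :: "'a measure \<Rightarrow> nat \<Rightarrow> real \<Rightarrow> (nat \<Rightarrow> real) \<Rightarrow> (nat \<Rightarrow> 'a \<Rightarrow> real) \<Rightarrow> bool" where
  "nonredundant M d r S0 S1 \<longleftrightarrow>
     (\<forall>\<theta>0::real. \<forall>\<theta>::nat \<Rightarrow> real.
        \<theta>0 * 1 + (\<Sum>i=1..d. \<theta> i * S0 i) = 0 \<and>
        (AE \<omega> in M. \<theta>0 * (1 + r) + (\<Sum>i=1..d. \<theta> i * S1 i \<omega>) = 0)
        \<longrightarrow> \<theta>0 = 0 \<and> (\<forall>i\<in>{1..d}. \<theta> i = 0))"

(* standing assumptions on the market *)
definition market :: "'a measure \<Rightarrow> nat \<Rightarrow> real \<Rightarrow> (nat \<Rightarrow> real) \<Rightarrow> (nat \<Rightarrow> 'a \<Rightarrow> real) \<Rightarrow> bool" where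
  "market M d r S0 S1 \<longleftrightarrow>
     r > -1 \<and>
     (\<forall>i\<in>{1..d}. S0 i > 0 \<and> S1 i \<in> borel_measurable M) \<and>
     nonredundant M d r S0 S1 \<and>
     (\<forall>i\<in>{1..d}. integrable M (ret S0 S1 i)) \<and>
     (\<exists>i\<in>{1..d}. (\<integral>\<omega>. ret S0 S1 i \<omega> \<partial>M) \<noteq> r)"

definition arbitrage_first_kind :: "'a measure \<Rightarrow> nat \<Rightarrow> real \<Rightarrow> (nat \<Rightarrow> real) \<Rightarrow> (nat \<Rightarrow> 'a \<Rightarrow> real) \<Rightarrow> bool" where
  "arbitrage_first_kind M d r S0 S1 \<longleftrightarrow>
     (\<exists>\<theta>0::real. \<exists>\<theta>::nat \<Rightarrow> real.
        \<theta>0 * 1 + (\<Sum>i=1..d. \<theta> i * S0 i) \<le> 0 \<and>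
        (AE \<omega> in M. \<theta>0 * (1 + r) + (\<Sum>i=1..d. \<theta> i * S1 i \<omega>) \<ge> 0) \<and>
        measure M {\<omega>\<in>space M. \<theta>0 * (1 + r) + (\<Sum>i=1..d. \<theta> i * S1 i \<omega>) > 0} > 0)"

(* portfolios \<pi> \<in> \<real>^d are functions nat \<Rightarrow> real; only the values on {1..d} matter *)
definition strong_rho_arbitrage :: "'a measure \<Rightarrow> (('a \<Rightarrow> real) \<Rightarrow> ereal) \<Rightarrow> nat \<Rightarrow> real
    \<Rightarrow> (nat \<Rightarrow> real) \<Rightarrow> (nat \<Rightarrow> 'a \<Rightarrow> real) \<Rightarrow> bool" where
  "strong_rho_arbitrage M \<rho> d r S0 S1 \<longleftrightarrow>
     (\<forall>\<pi>::nat \<Rightarrow> real. \<exists>\<pi>'::nat \<Rightarrow> real.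
        (\<integral>\<omega>. excess_return d r S0 S1 \<pi>' \<omega> \<partial>M) > (\<integral>\<omega>. excess_return d r S0 S1 \<pi> \<omega> \<partial>M) \<and>
        \<rho> (excess_return d r S0 S1 \<pi>') < \<rho> (excess_return d r S0 S1 \<pi>))"

end

theory Submission
  imports Defs
begin

lemma market_from_Z:
  fixes M :: "'a measure" and L :: "('a \<Rightarrow> real) set" and \<rho> :: "('a \<Rightarrow> real) \<Rightarrow> ereal"
  assumes P: "prob_space M"
    and Zint: "integrable M Z" and Zmean: "(\<integral>\<omega>. Z \<omega> \<partial>M) > 0"
    and negZ: "\<not> (AE \<omega> in M. Z \<omega> \<ge> 0)"
    and ZL: "Z \<in> L" and nZL: "(\<lambda>\<omega>. (-1) * Z \<omega>) \<in> L"
    and rq: "\<rho> Z = ereal q" and q: "q < 0"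
    and nfin: "\<rho> (\<lambda>\<omega>. (-1) * Z \<omega>) \<noteq> -\<infinity>"
    and ph: "pos_homogeneous L \<rho>"
  shows "\<exists>d r S0 S1. market M d r S0 S1 \<and> (\<forall>i\<in>{1..d}. ret S0 S1 i \<in> L) \<and>
           \<not> arbitrage_first_kind M d r S0 S1 \<and> strong_rho_arbitrage M \<rho> d r S0 S1"
proof -
  interpret prob_space M by (rule P)
  define S0 :: "nat \<Rightarrow> real" where "S0 = (\<lambda>i. 1)"
  define S1 where "S1 = (\<lambda>(i::nat) \<omega>. 1 + Z \<omega>)"
  have ret: "ret S0 S1 i = Z" for i by (rule ext) (simp add: ret_def S0_def S1_def)
  have ex: "excess_return 1 0 S0 S1 \<pi> = (\<lambda>\<omega>. \<pi> 1 * Z \<omega>)" for \<pi>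
    by (rule ext) (simp add: excess_return_def ret)
  have Zmeas: "Z \<in> borel_measurable M" using Zint by auto
  have posZ: "\<not> (AE \<omega> in M. Z \<omega> \<le> 0)"
  proof
    assume "AE \<omega> in M. Z \<omega> \<le> 0"
    hence "(\<integral>\<omega>. Z \<omega> \<partial>M) \<le> (\<integral>\<omega>. 0 \<partial>M)"
      by (intro integral_mono_AE) (auto simp: Zint)
    thus False using Zmean by simp
  qed
  have H: "\<And>X t. X \<in> L \<Longrightarrow> t \<ge> 0 \<Longrightarrow> \<rho> (\<lambda>\<omega>. t * X \<omega>) = ereal t * \<rho> X"
    using ph unfolding pos_homogeneous_def by blast
  have phZ: "\<rho> (\<lambda>\<omega>. t * Z \<omega>) = ereal t * \<rho> Z" if "t \<ge> 0" for t
    using H[OF ZL that] .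
  have phnZ: "\<rho> (\<lambda>\<omega>. t * ((-1) * Z \<omega>)) = ereal t * \<rho> (\<lambda>\<omega>. (-1) * Z \<omega>)" if "t \<ge> 0" for t
    using H[OF nZL that] .
  have mk: "market M 1 0 S0 S1"
    unfolding market_def
  proof (intro conjI)
    show "\<forall>i\<in>{1..1}. 0 < S0 i \<and> S1 i \<in> borel_measurable M"
      using Zmeas by (auto simp: S0_def S1_def)
    show "nonredundant M 1 0 S0 S1"
      unfolding nonredundant_def
    proof (intro allI impI)
      fix \<theta>0 :: real and \<theta> :: "nat \<Rightarrow> real"
      assume a: "\<theta>0 * 1 + (\<Sum>i = 1..1. \<theta> i * S0 i) = 0 \<and>
        (AE \<omega> in M. \<theta>0 * (1 + 0) + (\<Sum>i = 1..1. \<theta> i * S1 i \<omega>) = 0)"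
      hence t0: "\<theta>0 = - \<theta> 1" by (simp add: S0_def)
      have "AE \<omega> in M. \<theta> 1 * Z \<omega> = 0"
        using a t0 by (auto simp: S1_def algebra_simps)
      show "\<theta>0 = 0 \<and> (\<forall>i\<in>{1..1}. \<theta> i = 0)"
      proof (cases "\<theta> 1 = 0")
        case True thus ?thesis using t0 by auto
      next
        case False
        with \<open>AE \<omega> in M. \<theta> 1 * Z \<omega> = 0\<close> have "AE \<omega> in M. Z \<omega> \<ge> 0" by (auto elim: AE_mp)
        with negZ show ?thesis by blast
      qed
    qed
    show "\<forall>i\<in>{1..1}. integrable M (ret S0 S1 i)" using Zint by (simp add: ret)
    show "\<exists>i\<in>{1..1}. (\<integral>\<omega>. ret S0 S1 i \<omega> \<partial>M) \<noteq> 0" using Zmean by (simp add: ret)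
  qed simp
  have naf: "\<not> arbitrage_first_kind M 1 0 S0 S1"
    unfolding arbitrage_first_kind_def
  proof clarify
    fix \<theta>0 :: real and \<theta> :: "nat \<Rightarrow> real"
    assume c: "\<theta>0 * 1 + (\<Sum>i = 1..1. \<theta> i * S0 i) \<le> 0"
      and ae: "AE \<omega> in M. 0 \<le> \<theta>0 * (1 + 0) + (\<Sum>i = 1..1. \<theta> i * S1 i \<omega>)"
      and m: "0 < measure M {\<omega> \<in> space M. 0 < \<theta>0 * (1 + 0) + (\<Sum>i = 1..1. \<theta> i * S1 i \<omega>)}"
    have c': "\<theta>0 + \<theta> 1 \<le> 0" using c by (simp add: S0_def)
    have ae': "AE \<omega> in M. 0 \<le> (\<theta>0 + \<theta> 1) + \<theta> 1 * Z \<omega>"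
      using ae by (simp add: S1_def algebra_simps)
    consider "\<theta> 1 = 0" | "\<theta> 1 > 0" | "\<theta> 1 < 0" by linarith
    thus False
    proof cases
      case 1
      hence e: "{\<omega> \<in> space M. 0 < \<theta>0 * (1 + 0) + (\<Sum>i = 1..1. \<theta> i * S1 i \<omega>)} = {}"
        using c' by (auto simp: S1_def)
      from m show False unfolding e by simp
    next
      case 2
      have "AE \<omega> in M. Z \<omega> \<ge> 0"
        using ae'
      proof (rule AE_mp, intro AE_I2 impI)
        fix \<omega> assume "0 \<le> \<theta>0 + \<theta> 1 + \<theta> 1 * Z \<omega>"
        hence "0 \<le> \<theta> 1 * Z \<omega>" using c' by linarith
        thus "Z \<omega> \<ge> 0" using 2 by (simp add: zero_le_mult_iff)
      qed
      thus False using negZ by blast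
    next
      case 3
      have "AE \<omega> in M. Z \<omega> \<le> 0"
        using ae'
      proof (rule AE_mp, intro AE_I2 impI)
        fix \<omega> assume "0 \<le> \<theta>0 + \<theta> 1 + \<theta> 1 * Z \<omega>"
        hence "0 \<le> \<theta> 1 * Z \<omega>" using c' by linarith
        thus "Z \<omega> \<le> 0" using 3 by (simp add: zero_le_mult_iff)
      qed
      thus False using posZ by blast
    qed
  qed
  define z where "z = (\<integral>\<omega>. Z \<omega> \<partial>M)"
  have z: "z > 0" using Zmean z_def by simp
  have mean: "(\<integral>\<omega>. excess_return 1 0 S0 S1 \<pi> \<omega> \<partial>M) = \<pi> 1 * z" for \<pi>
    unfolding ex z_def by simp
  have sra: "strong_rho_arbitrage M \<rho> 1 0 S0 S1"
    unfolding strong_rho_arbitrage_def mean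
  proof
    fix \<pi> :: "nat \<Rightarrow> real"
    show "\<exists>\<pi>'. \<pi> 1 * z < \<pi>' 1 * z \<and>
              \<rho> (excess_return 1 0 S0 S1 \<pi>') < \<rho> (excess_return 1 0 S0 S1 \<pi>)"
    proof (cases "\<pi> 1 \<ge> 0")
      case True
      have "\<rho> (excess_return 1 0 S0 S1 \<pi>) = ereal (\<pi> 1 * q)"
        unfolding ex using phZ[OF True] rq by simp
      moreover have "\<rho> (excess_return 1 0 S0 S1 (\<lambda>_. \<pi> 1 + 1)) = ereal ((\<pi> 1 + 1) * q)"
        unfolding ex using phZ[of "\<pi> 1 + 1"] True rq by simp
      moreover have "(\<pi> 1 + 1) * q < \<pi> 1 * q" using q by (simp add: algebra_simps)
      moreover have "\<pi> 1 * z < (\<pi> 1 + 1) * z" using z by (simp add: algebra_simps)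
      ultimately show ?thesis by (intro exI[of _ "\<lambda>_. \<pi> 1 + 1"]) simp
    next
      case False
      have eqf: "(\<lambda>\<omega>. \<pi> 1 * Z \<omega>) = (\<lambda>\<omega>. (- \<pi> 1) * ((-1) * Z \<omega>))" by auto
      have r1: "\<rho> (excess_return 1 0 S0 S1 \<pi>) = ereal (- \<pi> 1) * \<rho> (\<lambda>\<omega>. (-1) * Z \<omega>)"
        unfolding ex eqf using phnZ[of "- \<pi> 1"] False by simp
      show ?thesis
      proof (cases "\<rho> (\<lambda>\<omega>. (-1) * Z \<omega>) = \<infinity>")
        case True
        hence "\<rho> (excess_return 1 0 S0 S1 \<pi>) = \<infinity>" using r1 False by simp
        moreover have "\<rho> (excess_return 1 0 S0 S1 (\<lambda>_. 0)) = ereal (0 * q)"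
          unfolding ex using phZ[of 0] rq by simp
        moreover have "\<pi> 1 * z < 0 * z" using False z by (simp add: mult_neg_pos)
        ultimately show ?thesis by (intro exI[of _ "\<lambda>_. 0"]) simp
      next
        case fin: False
        then obtain w where w: "\<rho> (\<lambda>\<omega>. (-1) * Z \<omega>) = ereal w" using nfin by (cases "\<rho> (\<lambda>\<omega>. (-1) * Z \<omega>)") auto
        define t where "t = (\<bar>\<pi> 1 * w\<bar> + 1) / (- q)"
        have t: "t > 0" unfolding t_def using q by (intro divide_pos_pos) auto
        have tq: "t * q = - (\<bar>\<pi> 1 * w\<bar> + 1)" unfolding t_def using q by (simp add: field_simps)
        have "\<rho> (excess_return 1 0 S0 S1 \<pi>) = ereal (- \<pi> 1 * w)" using r1 w by simp
        moreover have "\<rho> (excess_return 1 0 S0 S1 (\<lambda>_. t)) = ereal (t * q)"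
          unfolding ex using phZ[of t] t rq by simp
        moreover have "t * q < - \<pi> 1 * w" using tq abs_ge_self[of "\<pi> 1 * w"] abs_ge_minus_self[of "\<pi> 1 * w"] by linarith
        moreover have "\<pi> 1 * z < t * z" using False z t
          by (smt (verit) mult_neg_pos mult_pos_pos)
        ultimately show ?thesis by (intro exI[of _ "\<lambda>_. t"]) simp
      qed
    qed
  qed
  show ?thesis
    using mk naf sra ZL by (intro exI[of _ 1] exI[of _ 0] exI[of _ S0] exI[of _ S1]) (simp add: ret)
qed

theorem theorem3p23:
  fixes M :: "'a measure" and L :: "('a \<Rightarrow> real) set" and \<rho> :: "('a \<Rightarrow> real) \<Rightarrow> ereal"
  assumes "prob_space M"
    and "riesz_space L"
    and "Linf M \<subseteq> L" and "L \<subseteq> L1 M"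
    and "\<forall>X\<in>L. \<rho> X \<noteq> -\<infinity>"
    and "monotone_rm M L \<rho>" and "cash_invariant L \<rho>" and "pos_homogeneous L \<rho>"
    and "\<exists>X\<in>L. \<rho> X < WC M X"
  shows "\<exists>d r S0 S1. market M d r S0 S1 \<and> (\<forall>i\<in>{1..d}. ret S0 S1 i \<in> L) \<and>
           \<not> arbitrage_first_kind M d r S0 S1 \<and> strong_rho_arbitrage M \<rho> d r S0 S1"
proof -
  note P = assms(1)
  interpret prob_space M by (rule P)
  have R0: "(\<lambda>\<omega>. 0) \<in> L"
    and Radd: "\<And>X Y. X \<in> L \<Longrightarrow> Y \<in> L \<Longrightarrow> (\<lambda>\<omega>. X \<omega> + Y \<omega>) \<in> L"
    and Rmul: "\<And>X c. X \<in> L \<Longrightarrow> (\<lambda>\<omega>. c * X \<omega>) \<in> L"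
    and Rmax: "\<And>X Y. X \<in> L \<Longrightarrow> Y \<in> L \<Longrightarrow> (\<lambda>\<omega>. max (X \<omega>) (Y \<omega>)) \<in> L"
    using assms(2) unfolding riesz_space_def by blast+
  have Lint: "\<And>X. X \<in> L \<Longrightarrow> integrable M X" using assms(4) unfolding L1_def by blast
  have mon: "\<And>X Y. X \<in> L \<Longrightarrow> Y \<in> L \<Longrightarrow> (AE \<omega> in M. X \<omega> \<le> Y \<omega>) \<Longrightarrow> \<rho> X \<ge> \<rho> Y"
    using assms(6) unfolding monotone_rm_def by blast
  have ci: "\<And>X c. X \<in> L \<Longrightarrow> \<rho> (\<lambda>\<omega>. X \<omega> + c) = \<rho> X - ereal c"
    using assms(7) unfolding cash_invariant_def by blast
  have H: "\<And>X t. X \<in> L \<Longrightarrow> t \<ge> 0 \<Longrightarrow> \<rho> (\<lambda>\<omega>. t * X \<omega>) = ereal t * \<rho> X"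
    using assms(8) unfolding pos_homogeneous_def by blast
  have nmi: "\<And>X. X \<in> L \<Longrightarrow> \<rho> X \<noteq> -\<infinity>" using assms(5) by blast
  have r0: "\<rho> (\<lambda>\<omega>. 0) = 0" using H[OF R0, of 0] by (simp add: zero_ereal_def[symmetric])
  obtain X where XL: "X \<in> L" and XW: "\<rho> X < WC M X" using assms(9) by blast
  obtain m where m1: "\<rho> X < ereal m" and m2: "ereal m < WC M X"
    using ereal_dense2[OF XW] by blast
  obtain a0 where a0: "\<rho> X = ereal a0"
    using nmi[OF XL] m1 by (cases "\<rho> X") auto
  have Xm: "X \<in> borel_measurable M" using Lint[OF XL] by auto
  have "(\<lambda>\<omega>. m) \<in> Linf M" unfolding Linf_def by (auto intro!: exI[of _ "\<bar>m\<bar>"])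
  hence cL: "(\<lambda>\<omega>. m) \<in> L" using assms(3) by blast
  define Y where "Y = (\<lambda>\<omega>. X \<omega> + m)"
  have YL: "Y \<in> L" unfolding Y_def using Radd[OF XL cL] by simp
  have rY: "\<rho> Y < 0" unfolding Y_def using ci[OF XL, of m] a0 m1 by simp
  have nY1: "\<not> (AE \<omega> in M. Y \<omega> \<le> 0)"
  proof
    assume "AE \<omega> in M. Y \<omega> \<le> 0"
    hence "\<rho> Y \<ge> \<rho> (\<lambda>\<omega>. 0)" by (intro mon[OF YL R0]) simp
    thus False using rY r0 by simp
  qed
  have nY2: "\<not> (AE \<omega> in M. Y \<omega> \<ge> 0)"
  proof
    assume "AE \<omega> in M. Y \<omega> \<ge> 0"
    hence "AE \<omega> in M. ereal (- X \<omega>) \<le> ereal m" by (auto simp: Y_def elim: AE_mp)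
    hence "WC M X \<le> ereal m" unfolding WC_def using Xm by (intro esssup_I) auto
    thus False using m2 by simp
  qed
  define Yp where "Yp = (\<lambda>\<omega>. max (Y \<omega>) 0)"
  have YpL: "Yp \<in> L" unfolding Yp_def using Rmax[OF YL R0] by simp
  have Yint: "integrable M Y" using Lint[OF YL] .
  have Ypint: "integrable M Yp" using Lint[OF YpL] .
  define a where "a = (\<integral>\<omega>. Yp \<omega> \<partial>M)"
  define b where "b = (\<integral>\<omega>. Y \<omega> \<partial>M)"
  have a: "a > 0"
  proof -
    have ge: "a \<ge> 0" unfolding a_def Yp_def by (rule integral_nonneg_AE) auto
    have "a \<noteq> 0"
    proof
      assume "a = 0"
      hence "AE \<omega> in M. Yp \<omega> = 0" unfolding a_def
        using integral_nonneg_eq_0_iff_AE[OF Ypint] by (simp add: Yp_def)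
      hence "AE \<omega> in M. Y \<omega> \<le> 0" by (auto simp: Yp_def elim: AE_mp)
      thus False using nY1 by blast
    qed
    thus ?thesis using ge by simp
  qed
  have ba: "b \<le> a" unfolding a_def b_def using Yint Ypint
    by (intro integral_mono) (auto simp: Yp_def)
  define \<epsilon> where "\<epsilon> = a / (2 * a - b + 1)"
  have den: "2 * a - b + 1 > 0" using a ba by linarith
  have e0: "\<epsilon> > 0" unfolding \<epsilon>_def using a den by simp
  have e1: "\<epsilon> \<le> 1" unfolding \<epsilon>_def using a ba den by (simp add: divide_le_eq_1)
  define Z where "Z = (\<lambda>\<omega>. \<epsilon> * Y \<omega> + (1 - \<epsilon>) * Yp \<omega>)"
  have ZL: "Z \<in> L" unfolding Z_def using Radd[OF Rmul[OF YL] Rmul[OF YpL]] by simp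
  have Zint: "integrable M Z" using Lint[OF ZL] .
  have EZ: "(\<integral>\<omega>. Z \<omega> \<partial>M) = \<epsilon> * b + (1 - \<epsilon>) * a"
    unfolding Z_def a_def b_def using Yint Ypint by simp
  have f1: "(a - b) / (2 * a - b + 1) < 1" using den a by (simp add: divide_less_eq)
  have "\<epsilon> * (a - b) = a * ((a - b) / (2 * a - b + 1))" unfolding \<epsilon>_def by simp
  also have "\<dots> < a * 1" using f1 a by (intro mult_strict_left_mono) auto
  finally have "\<epsilon> * (a - b) < a" by simp
  hence "\<epsilon> * b + (1 - \<epsilon>) * a > 0" by (simp add: algebra_simps)
  hence Zmean: "(\<integral>\<omega>. Z \<omega> \<partial>M) > 0" using EZ by simp
  have YZ: "Y \<omega> \<le> Z \<omega>" for \<omega>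
  proof -
    have "(1 - \<epsilon>) * Y \<omega> \<le> (1 - \<epsilon>) * Yp \<omega>" using e1 by (intro mult_left_mono) (auto simp: Yp_def)
    thus ?thesis unfolding Z_def by (simp add: algebra_simps)
  qed
  have "\<rho> Z \<le> \<rho> Y" by (intro mon[OF YL ZL]) (simp add: YZ)
  hence rZ: "\<rho> Z < 0" using rY by simp
  obtain q where q: "\<rho> Z = ereal q" using nmi[OF ZL] rZ by (cases "\<rho> Z") auto
  have qn: "q < 0" using rZ q by simp
  have negZ: "\<not> (AE \<omega> in M. Z \<omega> \<ge> 0)"
  proof
    assume "AE \<omega> in M. Z \<omega> \<ge> 0"
    hence "AE \<omega> in M. Y \<omega> \<ge> 0"
    proof (rule AE_mp, intro AE_I2 impI)
      fix \<omega> assume z: "Z \<omega> \<ge> 0"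
      show "Y \<omega> \<ge> 0"
      proof (rule ccontr)
        assume "\<not> Y \<omega> \<ge> 0"
        hence "Y \<omega> < 0" by simp
        hence "Z \<omega> = \<epsilon> * Y \<omega>" unfolding Z_def Yp_def by simp
        also have "\<dots> < 0" using e0 \<open>Y \<omega> < 0\<close> by (simp add: mult_pos_neg)
        finally show False using z by simp
      qed
    qed
    thus False using nY2 by blast
  qed
  have nZL: "(\<lambda>\<omega>. (-1) * Z \<omega>) \<in> L" using Rmul[OF ZL] .
  show ?thesis
    by (rule market_from_Z[OF P Zint Zmean negZ ZL nZL q qn nmi[OF nZL] assms(8)])
qed

end
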